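(* Let $T\le T'$ be positive integers, $f:\mathbb{R}^{T'}\to\mathbb{R}$ differentiable with $\mathrm{prog}(\nabla f(x))\le\mathrm{prog}(x)+1$ for all $x$, $0<\tau_1\le\dots\le\tau_n$, $p\in(0,1]$, $\mathcal{D}_i=\mathrm{Bernoulli}(p)$ and $O_i=O^G_{\tau_i}$ for all $i\in[n]$, where $$[G(x;\xi)]_j=\nabla_jf(x)\Big(1+\mathbb{1}[j>\mathrm{prog}(x)]\Big(\frac\xi p-1\Big)\Big),\quad x\in\mathbb{R}^{T'},\ \xi\in\{0,1\},\ j\in[T'],$$ and let $A$ be a zero-respecting algorithm run in the time multiple oracles protocol on $\mathbb{R}^{T'}$. Then for every $\delta\in(0,1]$ and every $t\ge0$ with $$t\le\frac1{24}\min_{m\in[n]}\left[\Big(\sum_{i=1}^m\frac1{\tau_i}\Big)^{-1}\Big(\frac1p+m\Big)\right]\Big(\frac T2+\log\delta\Big),$$ with probability at least $1-\delta$ we have $\mathrm{prog}(x^k)<T$ for all $k\in S_t$.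
   Context: $\mathrm{prog}(x)=\max\{i\ge0: x_i\ne0\}$ with the convention $x_0\equiv1$ (so $\mathrm{prog}(0)=0$). Time multiple oracles protocol. There are $n$ oracles $O_1,\dots,O_n$ with distributions $\mathcal{D}_1,\dots,\mathcal{D}_n$ on a sample space $\mathbb{S}_\xi$. An algorithm is a sequence $A=\{A^k\}_{k\ge0}$ with $A^0\in\mathbb{R}_{\ge0}\times[n]\times\mathbb{R}^d$ and $A^k:(\mathbb{R}^d)^k\to\mathbb{R}_{\ge0}\times[n]\times\mathbb{R}^d$ for $k\ge1$, such that for all $k\ge1$ and all $g^1,\dots,g^k$ the first (time) component of $A^k(g^1,\dots,g^k)$ is at least the first component of $A^{k-1}(g^1,\dots,g^{k-1})$. Each oracle $i$ has a state in $\mathbb{R}_{\ge0}\times\mathbb{R}^d\times\{0,1\}$, initially $s_i^0=(0,0,0)$. Set $t^0=0$. For $k=0,1,2,\dots$: $(t^{k+1},i^{k+1},x^k)=A^k(g^1,\dots,g^k)$ ($=A^0$ for $k=0$); draw $\xi^{k+1}\sim\mathcal{D}_{i^{k+1}}$ independently of everything before; $(s^{k+1}_{i^{k+1}},g^{k+1})=O_{i^{k+1}}(t^{k+1},x^k,s^k_{i^{k+1}},\xi^{k+1})$, and $s^{k+1}_j=s^k_j$ for $j\ne i^{k+1}$. For $t\ge0$, $S_t=\{k\in\mathbb{N}_0: t^k\le t\}$. Delayed oracle. For $\tau>0$ and a mapping $G:\mathbb{R}^d\times\mathbb{S}_\xi\to\mathbb{R}^d$, the oracle $O^G_\tau(t,x,(s_t,s_x,s_q),\xi)$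 returns $((t,x,1),0)$ if $s_q=0$; $((s_t,s_x,1),0)$ if $s_q=1$ and $t<s_t+\tau$; $((0,0,0),G(s_x;\xi))$ if $s_q=1$ and $t\ge s_t+\tau$. Zero-respecting: $\mathrm{supp}(x^k)\subseteq\bigcup_{j=1}^k\mathrm{supp}(g^j)$ for all $k\in\mathbb{N}_0$ and all realizations, where $\mathrm{supp}(x)=\{i:x_i\ne0\}$. *)

theory Defs
  imports "HOL-Analysis.Analysis" "HOL-Probability.Probability"
begin

text \<open>Coordinates of R^{T'} are indexed by a finite linearly ordered type 'n with
  CARD('n) = T'; coordinate j is the (idx j)-th coordinate, idx j in {1..T'}.\<close>

definition idx :: "'n::{finite,linorder} \<Rightarrow> nat" where
  "idx j = card {i. i \<le> j}"

definition supp :: "real ^ 'n \<Rightarrow> 'n set" where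
  "supp x = {j. x $ j \<noteq> 0}"

definition prog :: "real ^ ('n::{finite,linorder}) \<Rightarrow> nat" where
  "prog x = Max (insert 0 (idx ` supp x))"

text \<open>Delayed oracle O^G_tau; oracle state (s_t, s_x, s_q) with s_q encoded as bool.\<close>
definition delayed_oracle ::
  "real \<Rightarrow> ('v::zero \<Rightarrow> 'x \<Rightarrow> 'v) \<Rightarrow> real \<Rightarrow> 'v \<Rightarrow> real \<times> 'v \<times> bool \<Rightarrow> 'x
     \<Rightarrow> (real \<times> 'v \<times> bool) \<times> 'v" where
  "delayed_oracle \<tau> G t x s \<xi> =
     (case s of (st, sx, sq) \<Rightarrow>
        if \<not> sq then ((t, x, True), 0)
        else if t < st + \<tau> then ((st, sx, True), 0)
        else ((0, 0, False), G sx \<xi>))"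

text \<open>The algorithm is A k [g^1,...,g^k]
  (meaningful only on lists of length k). Samples: \<xi>^{k+1} = \<omega> k.
  run ... k = ([g^1,...,g^k], oracle states s^k).\<close>
primrec run ::
  "(nat \<Rightarrow> 'v list \<Rightarrow> real \<times> nat \<times> 'v) \<Rightarrow> (nat \<Rightarrow> real \<Rightarrow> 'v \<Rightarrow> 's \<Rightarrow> 'x \<Rightarrow> 's \<times> 'v)
    \<Rightarrow> 's \<Rightarrow> (nat \<Rightarrow> 'x) \<Rightarrow> nat \<Rightarrow> 'v list \<times> (nat \<Rightarrow> 's)" where
  "run A Or s0 \<omega> 0 = ([], (\<lambda>_. s0))"
| "run A Or s0 \<omega> (Suc k) =
     (case run A Or s0 \<omega> k of (gs, s) \<Rightarrow>
       (case A k gs of (t', i, x) \<Rightarrow>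
         (case Or i t' x (s i) (\<omega> k) of (s', g) \<Rightarrow> (gs @ [g], s(i := s')))))"

definition grads where "grads A Or s0 \<omega> k = fst (run A Or s0 \<omega> k)"

definition proto_time where
  "proto_time A Or s0 \<omega> k = (if k = 0 then 0 else fst (A (k - 1) (grads A Or s0 \<omega> (k - 1))))"

definition proto_point where
  "proto_point A Or s0 \<omega> k = snd (snd (A k (grads A Or s0 \<omega> k)))"

definition is_algorithm :: "nat \<Rightarrow> (nat \<Rightarrow> 'v list \<Rightarrow> real \<times> nat \<times> 'v) \<Rightarrow> bool" where
  "is_algorithm n A \<longleftrightarrow>
     (\<forall>k gs. length gs = k \<longrightarrow> 0 \<le> fst (A k gs) \<and> fst (snd (A k gs)) \<in> {1..n}) \<and>
     (\<forall>k gs. length gs = Suc k \<longrightarrow> fst (A k (take k gs)) \<le> fst (A (Suc k) gs))"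

definition Gmap :: "(real ^ ('n::{finite,linorder}) \<Rightarrow> real ^ ('n::{finite,linorder})) \<Rightarrow> real \<Rightarrow> real ^ ('n::{finite,linorder}) \<Rightarrow> bool \<Rightarrow> real ^ ('n::{finite,linorder})" where
  "Gmap grad p x \<xi> = (\<chi> j. grad x $ j *
       (1 + (if idx j > prog x then of_bool \<xi> / p - 1 else 0)))"

end

theory Submission
  imports Defs
begin

lemma prog_le_iff: "prog (v::real^('n::{finite,linorder})) \<le> m \<longleftrightarrow> (\<forall>j. v $ j \<noteq> 0 \<longrightarrow> idx j \<le> m)"
  unfolding prog_def supp_def by (auto simp: Max_le_iff)

lemma idx_le_prog: "(v::real^('n::{finite,linorder})) $ j \<noteq> 0 \<Longrightarrow> idx j \<le> prog v"
  unfolding prog_def supp_def by (intro Max_ge) auto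

lemma prog_zero[simp]: "prog (0::real^('n::{finite,linorder})) = 0"
  unfolding prog_def supp_def by simp

lemma prog_Gmap1:
  fixes grad :: "real^('n::{finite,linorder}) \<Rightarrow> real^('n::{finite,linorder})"
  assumes "\<And>x. prog (grad x) \<le> prog x + 1"
  shows "prog (Gmap grad p x b) \<le> Suc (prog x)"
proof -
  have "\<forall>j. Gmap grad p x b $ j \<noteq> 0 \<longrightarrow> idx j \<le> Suc (prog x)"
  proof (intro allI impI)
    fix j assume "Gmap grad p x b $ j \<noteq> 0"
    then have "grad x $ j \<noteq> 0" by (auto simp: Gmap_def)
    then have "idx j \<le> prog (grad x)" by (rule idx_le_prog)
    with assms[of x] show "idx j \<le> Suc (prog x)" by simp
  qed
  then show ?thesis by (simp add: prog_le_iff)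
qed

lemma prog_Gmap0:
  fixes grad :: "real^('n::{finite,linorder}) \<Rightarrow> real^('n::{finite,linorder})"
  assumes "0 < p"
  shows "prog (Gmap grad p x False) \<le> prog x"
proof -
  have "\<forall>j. Gmap grad p x False $ j \<noteq> 0 \<longrightarrow> idx j \<le> prog x"
  proof (intro allI impI)
    fix j assume "Gmap grad p x False $ j \<noteq> 0"
    then show "idx j \<le> prog x" by (auto simp: Gmap_def split: if_splits)
  qed
  then show ?thesis by (simp add: prog_le_iff)
qed

definition Jl :: "(real^('n::{finite,linorder})) list \<Rightarrow> nat" where
  "Jl gs = Max (insert 0 (prog ` set gs))"

lemma Jl_snoc: "Jl (gs @ [g]) = max (Jl gs) (prog g)"
proof -
  have "insert 0 (prog ` set (gs@[g])) = insert (prog g) (insert 0 (prog ` set gs))" by auto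
  then show ?thesis unfolding Jl_def by (simp only: Max_insert finite_insert finite_imageI finite_set) (simp add: max.commute)
qed

lemma Jl_ge: "g \<in> set gs \<Longrightarrow> prog g \<le> Jl gs"
  unfolding Jl_def by simp

lemma Jl_nil[simp]: "Jl [] = 0" unfolding Jl_def by simp

lemma prog_supp_le:
  assumes "supp x \<subseteq> \<Union> (supp ` set gs)"
  shows "prog x \<le> Jl gs"
proof -
  have "\<forall>j. x $ j \<noteq> 0 \<longrightarrow> idx j \<le> Jl gs"
  proof (intro allI impI)
    fix j assume "x $ j \<noteq> 0"
    then have "j \<in> supp x" by (simp add: supp_def)
    with assms obtain g where g: "g \<in> set gs" "j \<in> supp g" by blast
    then have "idx j \<le> prog g" by (intro idx_le_prog) (simp add: supp_def)
    also have "\<dots> \<le> Jl gs" using g(1) by (rule Jl_ge)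
    finally show "idx j \<le> Jl gs" .
  qed
  then show ?thesis by (simp add: prog_le_iff)
qed

lemma do_F: "delayed_oracle \<tau> G t x (st, sx, False) \<xi> = ((t, x, True), 0)"
  by (simp add: delayed_oracle_def)
lemma do_W: "t < st + \<tau> \<Longrightarrow> delayed_oracle \<tau> G t x (st, sx, True) \<xi> = ((st, sx, True), 0)"
  by (simp add: delayed_oracle_def)
lemma do_R: "\<not> t < st + \<tau> \<Longrightarrow> delayed_oracle \<tau> G t x (st, sx, True) \<xi> = ((0, 0, False), G sx \<xi>)"
  by (simp add: delayed_oracle_def)

lemma run_Suc_eq:
  assumes "A k (fst (run A Or s0 \<omega> k)) = (t', i, x)"
    "Or i t' x (snd (run A Or s0 \<omega> k) i) (\<omega> k) = (s', g)"
  shows "run A Or s0 \<omega> (Suc k) = (fst (run A Or s0 \<omega> k) @ [g], (snd (run A Or s0 \<omega> k))(i := s'))"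
  using assms by (cases "run A Or s0 \<omega> k") simp

lemma run_prefix: "(\<forall>i<k. \<omega> i = \<omega>' i) \<Longrightarrow> run A Or s0 \<omega> k = run A Or s0 \<omega>' k"
  by (induction k) (auto split: prod.splits)

lemma length_grads: "length (grads A Or s0 \<omega> k) = k"
proof (induction k)
  case 0 then show ?case by (simp add: grads_def)
next
  case (Suc k) then show ?case by (auto simp: grads_def split: prod.splits)
qed


locale Lw =
  fixes n T :: nat and p :: real and \<tau> :: "nat \<Rightarrow> real"
    and grad :: "real ^ ('n::{finite,linorder}) \<Rightarrow> real ^ ('n::{finite,linorder})"
    and A :: "nat \<Rightarrow> (real ^ ('n::{finite,linorder})) list \<Rightarrow> real \<times> nat \<times> (real ^ ('n::{finite,linorder}))"
    and t \<delta> :: real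
  assumes T_pos: "1 \<le> T"
    and prog_grad: "\<And>x. prog (grad x) \<le> prog x + 1"
    and n_pos: "1 \<le> n"
    and tau_pos: "0 < \<tau> 1"
    and tau_mono: "\<And>i j. 1 \<le> i \<Longrightarrow> i \<le> j \<Longrightarrow> j \<le> n \<Longrightarrow> \<tau> i \<le> \<tau> j"
    and p: "0 < p" "p \<le> 1"
    and alg: "is_algorithm n A"
    and zero_resp: "\<And>\<omega> k. supp (proto_point A (\<lambda>i. delayed_oracle (\<tau> i) (Gmap grad p)) (0, 0, False) \<omega> k)
        \<subseteq> \<Union> (supp ` set (grads A (\<lambda>i. delayed_oracle (\<tau> i) (Gmap grad p)) (0, 0, False) \<omega> k))"
    and \<delta>: "0 < \<delta>" "\<delta> \<le> 1"
    and t: "0 \<le> t"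
      "t \<le> 1/24 * Min ((\<lambda>m. inverse (\<Sum>i=1..m. 1 / \<tau> i) * (1/p + real m)) ` {1..n})
             * (real T / 2 + ln \<delta>)"
begin

definition Fst where "Fst = Min ((\<lambda>m. inverse (\<Sum>i=1..m. 1 / \<tau> i) * (1/p + real m)) ` {1..n})"

lemma tau_pos': "j \<in> {1..n} \<Longrightarrow> 0 < \<tau> j"
  using tau_pos tau_mono[of 1 j] by force

lemma Fst_pos: "0 < Fst"
proof -
  have "\<forall>m\<in>{1..n}. 0 < inverse (\<Sum>i=1..m. 1 / \<tau> i) * (1/p + real m)"
  proof
    fix m assume m: "m \<in> {1..n}"
    have "0 < (\<Sum>i=1..m. 1 / \<tau> i)"
      by (rule sum_pos) (use m tau_pos' in auto)
    then show "0 < inverse (\<Sum>i=1..m. 1 / \<tau> i) * (1/p + real m)" using p by (intro mult_pos_pos) (simp_all add: add_pos_nonneg)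
  qed
  then show ?thesis unfolding Fst_def using n_pos by (subst Min_gr_iff) auto
qed

lemma time_bound:
  fixes u :: "nat \<Rightarrow> nat" and \<Delta> :: real
  assumes H: "\<forall>j\<in>{1..n}. real (u j) * \<tau> j \<le> \<Delta>" and N1: "1 \<le> (\<Sum>j\<in>{1..n}. u j)"
  shows "min 1 (p * real (\<Sum>j\<in>{1..n}. u j)) * Fst \<le> 2 * \<Delta>"
proof -
  define N where "N = (\<Sum>j\<in>{1..n}. u j)"
  obtain j0 where j0: "j0 \<in> {1..n}" "1 \<le> u j0"
  proof (rule ccontr)
    assume "\<not> thesis"
    with that have "\<forall>j\<in>{1..n}. u j = 0" by force
    with N1 show False by simp
  qed
  have "\<tau> j0 \<le> real (u j0) * \<tau> j0" using j0 tau_pos'[OF j0(1)] by simp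
  also have "\<dots> \<le> \<Delta>" using H j0 by blast
  finally have tj0: "\<tau> j0 \<le> \<Delta>" .
  define M where "M = {j\<in>{1..n}. \<tau> j \<le> \<Delta>}"
  have finM: "finite M" "M \<noteq> {}" using j0 tj0 by (auto simp: M_def)
  define m where "m = Max M"
  have mM: "m \<in> M" using finM m_def by simp
  then have m1: "1 \<le> m" "m \<le> n" "\<tau> m \<le> \<Delta>" by (auto simp: M_def)
  have small: "\<tau> j \<le> \<Delta>" if "j \<in> {1..m}" for j
    using tau_mono[of j m] that m1 by auto
  have big: "u j = 0" if "j \<in> {1..n}" "m < j" for j
  proof (rule ccontr)
    assume "u j \<noteq> 0"
    then have "\<tau> j \<le> real (u j) * \<tau> j" using tau_pos'[OF that(1)] by simp
    also have "\<dots> \<le> \<Delta>" using H that by blast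
    finally have "j \<in> M" using that by (auto simp: M_def)
    then have "j \<le> m" using finM m_def by simp
    with that show False by simp
  qed
  define s where "s = (\<Sum>i=1..m. 1 / \<tau> i)"
  have spos: "0 < s" unfolding s_def by (rule sum_pos) (use m1 tau_pos' in auto)
  have NM: "N = (\<Sum>j\<in>{1..m}. u j)"
    unfolding N_def by (rule sum.mono_neutral_right) (use m1 big in auto)
  have "real N = (\<Sum>j\<in>{1..m}. real (u j))" by (simp add: NM)
  also have "\<dots> \<le> (\<Sum>j\<in>{1..m}. \<Delta> * (1 / \<tau> j))"
  proof (rule sum_mono)
    fix j assume j: "j \<in> {1..m}"
    then have jn: "j \<in> {1..n}" using m1 by auto
    have "real (u j) * \<tau> j \<le> \<Delta>" using H jn by blast
    then show "real (u j) \<le> \<Delta> * (1 / \<tau> j)" using tau_pos'[OF jn] by (simp add: field_simps)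
  qed
  also have "\<dots> = \<Delta> * s" by (simp add: s_def sum_distrib_left)
  finally have Nle: "real N \<le> \<Delta> * s" .
  have "real m = (\<Sum>j\<in>{1..m}. (1::real))" by simp
  also have "\<dots> \<le> (\<Sum>j\<in>{1..m}. \<Delta> * (1 / \<tau> j))"
  proof (rule sum_mono)
    fix j assume j: "j \<in> {1..m}"
    then have jn: "j \<in> {1..n}" using m1 by auto
    show "1 \<le> \<Delta> * (1 / \<tau> j)" using small[OF j] tau_pos'[OF jn] by (simp add: field_simps)
  qed
  also have "\<dots> = \<Delta> * s" by (simp add: s_def sum_distrib_left)
  finally have mle: "real m \<le> \<Delta> * s" .
  have Fle: "Fst \<le> inverse s * (1/p + real m)"
    unfolding Fst_def s_def by (rule Min_le) (use m1 in auto)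
  have minle: "min 1 (p * real N) * (1/p + real m) \<le> real N + real m"
  proof (cases "p * real N \<le> 1")
    case True
    then have "min 1 (p * real N) * (1/p + real m) = real N + p * real N * real m"
      using p by (simp add: field_simps)
    also have "\<dots> \<le> real N + real m" using True mult_right_mono[OF True, of "real m"] by simp
    finally show ?thesis .
  next
    case False
    then have "1 / p \<le> real N" using p by (simp add: field_simps)
    with False show ?thesis by simp
  qed
  have mn0: "0 \<le> min 1 (p * real N)" using p by simp
  have "min 1 (p * real N) * Fst \<le> min 1 (p * real N) * (inverse s * (1/p + real m))"
    by (rule mult_left_mono[OF Fle mn0])
  also have "\<dots> = (min 1 (p * real N) * (1/p + real m)) / s" by (simp add: field_simps)
  also have "\<dots> \<le> (real N + real m) / s" using minle spos by (simp add: divide_right_mono)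
  also have "\<dots> \<le> (2 * \<Delta> * s) / s" using Nle mle spos by (intro divide_right_mono) auto
  also have "\<dots> = 2 * \<Delta>" using spos by simp
  finally show ?thesis unfolding N_def .
qed


definition gr where "gr \<omega> k = grads A (\<lambda>i. delayed_oracle (\<tau> i) (Gmap grad p)) (0, 0, False) \<omega> k"
definition sts where "sts \<omega> k = snd (run A (\<lambda>i. delayed_oracle (\<tau> i) (Gmap grad p)) (0, 0, False) \<omega> k)"
definition J where "J \<omega> k = Jl (gr \<omega> k)"
definition tm where "tm \<omega> k = proto_time A (\<lambda>i. delayed_oracle (\<tau> i) (Gmap grad p)) (0, 0, False) \<omega> k"
definition ti where "ti \<omega> k = fst (A k (gr \<omega> k))"
definition ii where "ii \<omega> k = fst (snd (A k (gr \<omega> k)))"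
definition xi where "xi \<omega> k = snd (snd (A k (gr \<omega> k)))"
definition useful where "useful \<omega> k S = (case sts \<omega> k (ii \<omega> k) of (st, sx, sq) \<Rightarrow>
   sq \<and> st + \<tau> (ii \<omega> k) \<le> ti \<omega> k \<and> S \<le> st)"

lemma gr_Suc: "gr \<omega> (Suc k) = gr \<omega> k @ [snd (delayed_oracle (\<tau> (ii \<omega> k)) (Gmap grad p) (ti \<omega> k) (xi \<omega> k) (sts \<omega> k (ii \<omega> k)) (\<omega> k))]"
  and sts_Suc: "sts \<omega> (Suc k) = (sts \<omega> k)(ii \<omega> k := fst (delayed_oracle (\<tau> (ii \<omega> k)) (Gmap grad p) (ti \<omega> k) (xi \<omega> k) (sts \<omega> k (ii \<omega> k)) (\<omega> k)))"
  unfolding gr_def sts_def ti_def ii_def xi_def grads_def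
  by (auto split: prod.splits)

lemma gr_0: "gr \<omega> 0 = []" and sts_0: "sts \<omega> 0 = (\<lambda>_. (0, 0, False))"
  unfolding gr_def sts_def grads_def by auto

lemma length_gr: "length (gr \<omega> k) = k"
  unfolding gr_def by (rule length_grads)

lemma tm_0: "tm \<omega> 0 = 0" unfolding tm_def proto_time_def by simp
lemma tm_Suc: "tm \<omega> (Suc k) = ti \<omega> k" unfolding tm_def proto_time_def ti_def gr_def by simp

lemma ti_nonneg: "0 \<le> ti \<omega> k" and ii_range: "ii \<omega> k \<in> {1..n}"
proof -
  have "\<forall>k gs. length gs = k \<longrightarrow> 0 \<le> fst (A k gs) \<and> fst (snd (A k gs)) \<in> {1..n}"
    using alg unfolding is_algorithm_def by blast
  then have "0 \<le> fst (A k (gr \<omega> k)) \<and> fst (snd (A k (gr \<omega> k))) \<in> {1..n}"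
    using length_gr[of \<omega> k] by blast
  then show "0 \<le> ti \<omega> k" "ii \<omega> k \<in> {1..n}" unfolding ti_def ii_def by auto
qed

lemma tm_mono: "tm \<omega> k \<le> tm \<omega> (Suc k)"
proof (cases k)
  case 0 then show ?thesis by (simp add: tm_0 tm_Suc ti_nonneg)
next
  case (Suc k')
  have "take k' (gr \<omega> (Suc k')) = gr \<omega> k'" by (simp add: gr_Suc length_gr)
  then have "fst (A k' (take k' (gr \<omega> (Suc k')))) \<le> fst (A (Suc k') (gr \<omega> (Suc k')))"
    using alg length_gr[of \<omega> "Suc k'"] unfolding is_algorithm_def by metis
  then show ?thesis using Suc \<open>take k' (gr \<omega> (Suc k')) = gr \<omega> k'\<close> by (simp add: tm_Suc ti_def)
qed

lemma tm_nonneg: "0 \<le> tm \<omega> k"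
  by (cases k) (simp_all add: tm_0 tm_Suc ti_nonneg)

lemma point_le: "prog (xi \<omega> k) \<le> J \<omega> k"
  using zero_resp[of \<omega> k] unfolding J_def xi_def gr_def proto_point_def by (rule prog_supp_le)

primrec aug :: "(nat \<Rightarrow> bool) \<Rightarrow> nat \<Rightarrow> real \<times> (nat \<Rightarrow> nat) \<times> real" where
  "aug \<omega> 0 = (0, (\<lambda>_. 0), 0)"
| "aug \<omega> (Suc k) = (case aug \<omega> k of (S, u, Ys) \<Rightarrow>
     (let u' = (if useful \<omega> k S then u(ii \<omega> k := Suc (u (ii \<omega> k))) else u) in
     if J \<omega> k < J \<omega> (Suc k) then
       (ti \<omega> k, (\<lambda>_. 0), Ys + (if J \<omega> k < T then min 1 (p * real (\<Sum>j\<in>{1..n}. u' j)) else 0))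
     else (S, u', Ys)))"

definition Sa where "Sa \<omega> k = fst (aug \<omega> k)"
definition U where "U \<omega> k = fst (snd (aug \<omega> k))"
definition Ys where "Ys \<omega> k = snd (snd (aug \<omega> k))"

lemma aug_eq: "aug \<omega> k = (Sa \<omega> k, U \<omega> k, Ys \<omega> k)"
  by (simp add: Sa_def U_def Ys_def)

definition Inv where "Inv \<omega> k \<longleftrightarrow> Sa \<omega> k \<le> tm \<omega> k \<and>
   (\<forall>i\<in>{1..n}. Sa \<omega> k + real (U \<omega> k i) * \<tau> i \<le> tm \<omega> k) \<and>
   (\<forall>i\<in>{1..n}. \<forall>st sx. sts \<omega> k i = (st, sx, True) \<longrightarrow>
       prog sx \<le> J \<omega> k \<and> (prog sx = J \<omega> k \<longrightarrow> Sa \<omega> k \<le> st) \<and>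
       (Sa \<omega> k \<le> st \<longrightarrow> Sa \<omega> k + real (U \<omega> k i) * \<tau> i \<le> st)) \<and>
   Ys \<omega> k * Fst \<le> 2 * Sa \<omega> k"

lemma Inv_0: "Inv \<omega> 0"
  unfolding Inv_def Sa_def U_def Ys_def by (simp add: tm_0 sts_0)


lemma aug_parts: "aug \<omega> k = (a, b, c) \<Longrightarrow> Sa \<omega> k = a \<and> U \<omega> k = b \<and> Ys \<omega> k = c"
  by (simp add: Sa_def U_def Ys_def)

lemma inv_step:
  assumes I: "Inv \<omega> k"
  shows "Inv \<omega> (Suc k) \<and> J \<omega> k \<le> J \<omega> (Suc k) \<and>
    (J \<omega> k < J \<omega> (Suc k) \<longrightarrow> useful \<omega> k (Sa \<omega> k) \<and> \<omega> k \<and> J \<omega> (Suc k) = Suc (J \<omega> k))"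
proof -
  define S where "S = Sa \<omega> k"
  define u where "u = U \<omega> k"
  define Y where "Y = Ys \<omega> k"
  define i where "i = ii \<omega> k"
  define t' where "t' = ti \<omega> k"
  define x where "x = xi \<omega> k"
  obtain st sx sq where stq: "sts \<omega> k i = (st, sx, sq)" by (cases "sts \<omega> k i") auto
  have iR: "i \<in> {1..n}" using ii_range by (simp add: i_def)
  have tmk: "tm \<omega> k \<le> t'" "tm \<omega> (Suc k) = t'" using tm_mono[of \<omega> k] by (simp_all add: t'_def tm_Suc)
  from I have Ia: "S \<le> tm \<omega> k" and Ib: "\<forall>j\<in>{1..n}. S + real (u j) * \<tau> j \<le> tm \<omega> k"
    and Ic: "\<forall>j\<in>{1..n}. \<forall>st sx. sts \<omega> k j = (st, sx, True) \<longrightarrow> prog sx \<le> J \<omega> k \<and>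
        (prog sx = J \<omega> k \<longrightarrow> S \<le> st) \<and> (S \<le> st \<longrightarrow> S + real (u j) * \<tau> j \<le> st)"
    and Id: "Y * Fst \<le> 2 * S" unfolding Inv_def S_def u_def Y_def by auto
  have augS: "aug \<omega> (Suc k) = (let u' = (if useful \<omega> k S then u(i := Suc (u i)) else u) in
      if J \<omega> k < J \<omega> (Suc k) then
       (t', (\<lambda>_. 0), Y + (if J \<omega> k < T then min 1 (p * real (\<Sum>j\<in>{1..n}. u' j)) else 0))
     else (S, u', Y))"
    unfolding S_def u_def Y_def i_def t'_def by (simp only: aug.simps(2) aug_eq[of \<omega> k]) simp
  define oc where "oc = delayed_oracle (\<tau> i) (Gmap grad p) t' x (st, sx, sq) (\<omega> k)"
  have grS: "gr \<omega> (Suc k) = gr \<omega> k @ [snd oc]" using gr_Suc[of \<omega> k] stq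
    by (simp add: oc_def i_def t'_def x_def)
  have stsS: "sts \<omega> (Suc k) = (sts \<omega> k)(i := fst oc)" using sts_Suc[of \<omega> k] stq
    by (simp add: oc_def i_def t'_def x_def)
  have JS: "J \<omega> (Suc k) = max (J \<omega> k) (prog (snd oc))" by (simp add: J_def grS Jl_snoc)
  show ?thesis
  proof (cases sq)
    case False
    have oc: "oc = ((t', x, True), 0)" by (simp add: oc_def False do_F)
    have JS': "J \<omega> (Suc k) = J \<omega> k" using JS oc by simp
    have nu: "\<not> useful \<omega> k S" using stq False by (simp add: useful_def i_def)
    have "aug \<omega> (Suc k) = (S, u, Y)" using augS JS' nu by simp
    then have P0: "Sa \<omega> (Suc k) = S \<and> U \<omega> (Suc k) = u \<and> Ys \<omega> (Suc k) = Y" by (rule aug_parts)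
    have P: "Sa \<omega> (Suc k) = S" "U \<omega> (Suc k) = u" "Ys \<omega> (Suc k) = Y" using P0 by auto
    have "Inv \<omega> (Suc k)"
      unfolding Inv_def P tmk(2) JS'
    proof (intro conjI ballI allI impI)
      show "S \<le> t'" using Ia tmk by simp
      show "Y * Fst \<le> 2 * S" by (rule Id)
    next
      fix j assume "j \<in> {1..n}"
      then show "S + real (u j) * \<tau> j \<le> t'" using Ib tmk by force
    next
      fix j st' sx' assume j: "j \<in> {1..n}" and h: "sts \<omega> (Suc k) j = (st', sx', True)"
      show "prog sx' \<le> J \<omega> k" "prog sx' = J \<omega> k \<Longrightarrow> S \<le> st'" "S \<le> st' \<Longrightarrow> S + real (u j) * \<tau> j \<le> st'"
      proof -
        show "prog sx' \<le> J \<omega> k"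
        proof (cases "j = i")
          case True then show ?thesis using h stsS oc point_le[of \<omega> k] by (simp add: x_def)
        next
          case False then show ?thesis using h stsS Ic j by auto
        qed
        show "S \<le> st'" if "prog sx' = J \<omega> k"
        proof (cases "j = i")
          case True then show ?thesis using h stsS oc Ia tmk by simp
        next
          case False then show ?thesis using h stsS Ic j that by auto
        qed
        show "S + real (u j) * \<tau> j \<le> st'" if "S \<le> st'"
        proof (cases "j = i")
          case True then show ?thesis using h stsS oc Ib tmk j by force
        next
          case False then show ?thesis using h stsS Ic j that by auto
        qed
      qed
    qed
    then show ?thesis using JS' by simp
  next
    case sqT: True
    show ?thesis
    proof (cases "t' < st + \<tau> i")
      case True
      have oc: "oc = ((st, sx, True), 0)" by (simp add: oc_def sqT True do_W)
      have JS': "J \<omega> (Suc k) = J \<omega> k" using JS oc by simp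
      have nu: "\<not> useful \<omega> k S" using stq True by (auto simp add: useful_def i_def t'_def)
      have "aug \<omega> (Suc k) = (S, u, Y)" using augS JS' nu by simp
      then have P0: "Sa \<omega> (Suc k) = S \<and> U \<omega> (Suc k) = u \<and> Ys \<omega> (Suc k) = Y" by (rule aug_parts)
    have P: "Sa \<omega> (Suc k) = S" "U \<omega> (Suc k) = u" "Ys \<omega> (Suc k) = Y" using P0 by auto
      have stsS': "sts \<omega> (Suc k) = sts \<omega> k" using stsS oc stq sqT by auto
      have "Inv \<omega> (Suc k)"
        unfolding Inv_def P tmk(2) JS' stsS'
      proof (intro conjI ballI)
        show "S \<le> t'" using Ia tmk by simp
        show "Y * Fst \<le> 2 * S" by (rule Id)
      next
        fix j assume "j \<in> {1..n}"
        then show "S + real (u j) * \<tau> j \<le> t'" using Ib tmk by force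
      next
        fix j assume "j \<in> {1..n}"
        then show "\<forall>st sx. sts \<omega> k j = (st, sx, True) \<longrightarrow> prog sx \<le> J \<omega> k \<and>
          (prog sx = J \<omega> k \<longrightarrow> S \<le> st) \<and> (S \<le> st \<longrightarrow> S + real (u j) * \<tau> j \<le> st)" using Ic by blast
      qed
      then show ?thesis using JS' by simp
    next
      case ret: False
      define g where "g = Gmap grad p sx (\<omega> k)"
      have oc: "oc = ((0, 0, False), g)" by (simp add: oc_def sqT ret do_R g_def)
      have JS': "J \<omega> (Suc k) = max (J \<omega> k) (prog g)" using JS oc by simp
      have pg1: "prog g \<le> Suc (prog sx)" unfolding g_def by (rule prog_Gmap1) (use prog_grad in auto)
      have psx: "prog sx \<le> J \<omega> k" using Ic iR stq sqT by auto
      have pg0: "prog g \<le> prog sx" if "\<not> \<omega> k"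
        using prog_Gmap0[OF p(1), of grad sx] that by (simp add: g_def)
      have use_iff: "useful \<omega> k S \<longleftrightarrow> S \<le> st" using stq sqT ret
        by (auto simp add: useful_def i_def t'_def)
      define u' where "u' = (if S \<le> st then u(i := Suc (u i)) else u)"
      have claim: "\<forall>j\<in>{1..n}. S + real (u' j) * \<tau> j \<le> t'"
      proof
        fix j assume j: "j \<in> {1..n}"
        show "S + real (u' j) * \<tau> j \<le> t'"
        proof (cases "j = i \<and> S \<le> st")
          case True
          then have "S + real (u i) * \<tau> i \<le> st" using Ic iR stq sqT by auto
          then show ?thesis using True ret by (simp add: u'_def algebra_simps)
        next
          case False
          then have "u' j = u j" by (auto simp: u'_def)
          then show ?thesis using Ib j tmk by force
        qed
      qed
      have stsS': "sts \<omega> (Suc k) = (sts \<omega> k)(i := (0, 0, False))" using stsS oc by simp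
      show ?thesis
      proof (cases "J \<omega> k < J \<omega> (Suc k)")
        case False
        then have JS'': "J \<omega> (Suc k) = J \<omega> k" using JS' by simp
        have "aug \<omega> (Suc k) = (S, u', Y)" using augS False use_iff by (simp add: u'_def)
        then have P0: "Sa \<omega> (Suc k) = S \<and> U \<omega> (Suc k) = u' \<and> Ys \<omega> (Suc k) = Y" by (rule aug_parts)
    have P: "Sa \<omega> (Suc k) = S" "U \<omega> (Suc k) = u'" "Ys \<omega> (Suc k) = Y" using P0 by auto
        have "Inv \<omega> (Suc k)"
          unfolding Inv_def P tmk(2) JS''
        proof (intro conjI ballI allI impI)
          show "S \<le> t'" using Ia tmk by simp
          show "Y * Fst \<le> 2 * S" by (rule Id)
        next
          fix j assume "j \<in> {1..n}"
          then show "S + real (u' j) * \<tau> j \<le> t'" using claim by blast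
        next
          fix j st' sx' assume j: "j \<in> {1..n}" and h: "sts \<omega> (Suc k) j = (st', sx', True)"
          then have ji: "j \<noteq> i" and h': "sts \<omega> k j = (st', sx', True)" using stsS' by (auto split: if_splits)
          have uj: "u' j = u j" using ji by (simp add: u'_def)
          show "prog sx' \<le> J \<omega> k" using Ic j h' by blast
          show "S \<le> st'" if "prog sx' = J \<omega> k" using Ic j h' that by blast
          show "S + real (u' j) * \<tau> j \<le> st'" if "S \<le> st'" using Ic j h' that uj by auto
        qed
        then show ?thesis using JS'' by simp
      next
        case prog: True
        have pgJ: "J \<omega> k < prog g" using prog JS' by simp
        then have psxJ: "prog sx = J \<omega> k" using pg1 psx by simp
        then have Sst: "S \<le> st" using Ic iR stq sqT by auto
        have wk: "\<omega> k" using pg0 pgJ psx by force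
        have JS'': "J \<omega> (Suc k) = Suc (J \<omega> k)" using JS' pgJ pg1 psx by simp
        define add where "add = (if J \<omega> k < T then min 1 (p * real (\<Sum>j\<in>{1..n}. u' j)) else 0)"
        have "aug \<omega> (Suc k) = (t', (\<lambda>_. 0), Y + add)" using augS prog use_iff Sst
          by (simp add: u'_def add_def)
        then have P0: "Sa \<omega> (Suc k) = t' \<and> U \<omega> (Suc k) = (\<lambda>_. 0) \<and> Ys \<omega> (Suc k) = Y + add" by (rule aug_parts)
    have P: "Sa \<omega> (Suc k) = t'" "U \<omega> (Suc k) = (\<lambda>_. 0)" "Ys \<omega> (Suc k) = Y + add" using P0 by auto
        have addle: "add * Fst \<le> 2 * (t' - S)"
        proof (cases "J \<omega> k < T")
          case True
          have "u' i = Suc (u i)" using Sst by (simp add: u'_def)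
          then have "1 \<le> u' i" by simp
          also have "u' i \<le> (\<Sum>j\<in>{1..n}. u' j)" by (rule member_le_sum) (use iR in auto)
          finally have N1: "1 \<le> (\<Sum>j\<in>{1..n}. u' j)" .
          have H: "\<forall>j\<in>{1..n}. real (u' j) * \<tau> j \<le> t' - S" using claim by force
          show ?thesis using time_bound[OF H N1] True by (simp add: add_def)
        next
          case False
          then show ?thesis using Ia tmk by (simp add: add_def)
        qed
        have "Inv \<omega> (Suc k)"
          unfolding Inv_def P tmk(2)
        proof (intro conjI ballI allI impI)
          show "t' \<le> t'" by simp
          show "(Y + add) * Fst \<le> 2 * t'" using Id addle by (simp add: algebra_simps)
        next
          fix j assume "j \<in> {1..n}"
          then show "t' + real 0 * \<tau> j \<le> t'" by simp
        next
          fix j st' sx' assume j: "j \<in> {1..n}" and h: "sts \<omega> (Suc k) j = (st', sx', True)"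
          then have ji: "j \<noteq> i" and h': "sts \<omega> k j = (st', sx', True)" using stsS' by (auto split: if_splits)
          have "prog sx' \<le> J \<omega> k" using Ic j h' by blast
          then show "prog sx' \<le> J \<omega> (Suc k)" "prog sx' = J \<omega> (Suc k) \<Longrightarrow> t' \<le> st'"
            using JS'' by simp_all
          show "t' + real 0 * \<tau> j \<le> st'" if "t' \<le> st'" using that by simp
        qed
        then show ?thesis using JS'' use_iff Sst wk unfolding S_def by simp
      qed
    qed
  qed
qed

lemma Inv_all: "Inv \<omega> k"
  by (induction k) (simp_all add: Inv_0 inv_step)


lemma aug_Suc_unf: "aug \<omega> (Suc k) = (let u' = (if useful \<omega> k (Sa \<omega> k) then (U \<omega> k)(ii \<omega> k := Suc (U \<omega> k (ii \<omega> k))) else U \<omega> k) in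
      if J \<omega> k < J \<omega> (Suc k) then
       (ti \<omega> k, (\<lambda>_. 0), Ys \<omega> k + (if J \<omega> k < T then min 1 (p * real (\<Sum>j\<in>{1..n}. u' j)) else 0))
     else (Sa \<omega> k, u', Ys \<omega> k))"
  by (simp only: aug.simps(2) aug_eq[of \<omega> k]) simp

lemma Ys_frozen1: "\<not> J \<omega> m < T \<Longrightarrow> Ys \<omega> (Suc m) = Ys \<omega> m"
proof -
  assume h: "\<not> J \<omega> m < T"
  have "Ys \<omega> (Suc m) = snd (snd (aug \<omega> (Suc m)))" by (simp add: Ys_def)
  also have "\<dots> = Ys \<omega> m" unfolding aug_Suc_unf using h by (simp add: Let_def)
  finally show ?thesis .
qed

lemma J_mono1: "J \<omega> m \<le> J \<omega> (Suc m)" using inv_step[OF Inv_all] by blast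

lemma frozen: "T \<le> J \<omega> k \<Longrightarrow> T \<le> J \<omega> (k + d) \<and> Ys \<omega> (k + d) = Ys \<omega> k"
proof (induction d)
  case 0 then show ?case by simp
next
  case (Suc d)
  then have "T \<le> J \<omega> (k + d)" "Ys \<omega> (k + d) = Ys \<omega> k" by auto
  moreover have "J \<omega> (k + d) \<le> J \<omega> (Suc (k + d))" by (rule J_mono1)
  ultimately show ?case using Ys_frozen1[of \<omega> "k + d"] by simp
qed

definition a0 where "a0 = 2 * t / Fst"
definition \<rho> :: real where "\<rho> = 1/13 + exp (-12)"

end

definition \<psi> :: "real \<Rightarrow> real \<Rightarrow> real" where
  "\<psi> p c = (if p * c < 1 then exp (-12 * (p * c)) / 13 + exp (-12) else exp (-12))"

lemma psi_nonneg: "0 \<le> \<psi> p c" unfolding \<psi>_def by simp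

lemma psi_step:
  fixes p c :: real
  assumes p: "0 < p" "p \<le> 1" and c: "0 \<le> c"
  shows "p * max (exp (-12 * min 1 (p * (c + 1)))) (\<psi> p (c + 1)) + (1 - p) * \<psi> p (c + 1) \<le> \<psi> p c"
proof -
  consider "1 \<le> p * c" | "p * c < 1" "1 \<le> p * (c + 1)" | "p * (c + 1) < 1" by linarith
  then show ?thesis
  proof cases
    case 1
    then have "1 \<le> p * (c + 1)" using p by (simp add: algebra_simps)
    then show ?thesis using 1 by (simp add: \<psi>_def algebra_simps)
  next
    case 2
    have "p * exp (-12) + (1 - p) * exp (-12) = exp (-12::real)" by (simp add: algebra_simps)
    also have "\<dots> \<le> exp (-12 * (p * c)) / 13 + exp (-12)" by simp
    finally show ?thesis using 2 by (simp add: \<psi>_def)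
  next
    case 3
    then have pc: "p * c < 1" using p by (simp add: algebra_simps)
    define E1 where "E1 = exp (-12 * (p * (c + 1)))"
    define e where "e = exp (-12::real)"
    have E1pos: "0 < E1" by (simp add: E1_def)
    have ps1: "\<psi> p (c + 1) = E1 / 13 + e" using 3 by (simp add: \<psi>_def E1_def e_def)
    have mn: "min 1 (p * (c + 1)) = p * (c + 1)" using 3 by simp
    have mx: "max (exp (-12 * min 1 (p * (c + 1)))) (\<psi> p (c + 1)) \<le> E1 + e"
      using ps1 mn E1pos by (simp add: E1_def e_def)
    have "p * max (exp (-12 * min 1 (p * (c + 1)))) (\<psi> p (c + 1)) + (1 - p) * \<psi> p (c + 1)
        \<le> p * (E1 + e) + (1 - p) * (E1 / 13 + e)"
      using mx ps1 p by (simp add: mult_left_mono)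
    also have "\<dots> = E1 * (1 + 12 * p) / 13 + e" by (simp add: field_simps)
    also have "\<dots> \<le> exp (-12 * (p * c)) / 13 + e"
    proof -
      have E1eq: "E1 = exp (-12 * (p * c)) * exp (-12 * p)"
        unfolding E1_def mult_exp_exp by (simp add: algebra_simps)
      have "1 + 12 * p \<le> exp (12 * p)" by (rule exp_ge_add_one_self)
      then have "(1 + 12 * p) * exp (-12 * p) \<le> exp (12 * p) * exp (-12 * p)"
        by (simp add: mult_right_mono)
      also have "\<dots> = 1" unfolding mult_exp_exp by simp
      finally have k: "(1 + 12 * p) * exp (-12 * p) \<le> 1" .
      have "E1 * (1 + 12 * p) = exp (-12 * (p * c)) * ((1 + 12 * p) * exp (-12 * p))"
        by (simp add: E1eq algebra_simps)
      also have "\<dots> \<le> exp (-12 * (p * c)) * 1" by (rule mult_left_mono[OF k]) simp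
      finally show ?thesis by simp
    qed
    finally show ?thesis using pc by (simp add: \<psi>_def e_def)
  qed
qed

context Lw begin

definition V where "V \<omega> k = exp (12 * (a0 - Ys \<omega> k)) *
   (if J \<omega> k < T then \<rho> ^ (T - 1 - J \<omega> k) * \<psi> p (real (\<Sum>j\<in>{1..n}. U \<omega> k j)) else 1)"

lemma rho_pos: "0 < \<rho>" unfolding \<rho>_def by (intro add_pos_pos) simp_all

lemma V_nonneg: "0 \<le> V \<omega> k"
  unfolding V_def using rho_pos psi_nonneg by (simp add: zero_le_mult_iff)

lemma V_0: "V \<omega> 0 = exp (12 * a0) * \<rho> ^ T"
proof -
  have "aug \<omega> 0 = (0, (\<lambda>_. 0), 0)" by simp
  then have P: "Ys \<omega> 0 = 0" "U \<omega> 0 = (\<lambda>_. 0)" by (auto simp: Ys_def U_def)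
  have "J \<omega> 0 = 0" by (simp add: J_def gr_0)
  moreover have "\<psi> p 0 = \<rho>" by (simp add: \<psi>_def \<rho>_def)
  moreover have "\<rho> ^ (T - 1) * \<rho> = \<rho> ^ T"
  proof -
    have "T = Suc (T - 1)" using T_pos by simp
    then show ?thesis by (metis power_Suc2)
  qed
  ultimately show ?thesis using T_pos unfolding V_def P by simp
qed

lemma bad_V:
  assumes "tm \<omega> k \<le> t" "T \<le> prog (xi \<omega> k)" "k \<le> K"
  shows "1 \<le> V \<omega> K"
proof -
  have Jk: "T \<le> J \<omega> k" using assms(2) point_le[of \<omega> k] by simp
  obtain d where K: "K = k + d" using assms(3) le_Suc_ex by blast
  have fr: "T \<le> J \<omega> K" "Ys \<omega> K = Ys \<omega> k" using frozen[OF Jk, of d] K by auto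
  have "Ys \<omega> k * Fst \<le> 2 * Sa \<omega> k" "Sa \<omega> k \<le> tm \<omega> k" using Inv_all[of \<omega> k] unfolding Inv_def by auto
  then have "Ys \<omega> k * Fst \<le> 2 * t" using assms(1) by simp
  then have "Ys \<omega> k \<le> a0" using Fst_pos unfolding a0_def by (simp add: field_simps)
  then show ?thesis using fr unfolding V_def by simp
qed

lemma run_agree: "\<forall>i<k. \<omega> i = \<omega>' i \<Longrightarrow> gr \<omega> k = gr \<omega>' k \<and> sts \<omega> k = sts \<omega>' k"
  unfolding gr_def sts_def grads_def using run_prefix[of k \<omega> \<omega>'] by metis

lemma agree_k:
  assumes "\<forall>i<k. \<omega> i = \<omega>' i"
  shows "J \<omega> k = J \<omega>' k" "ti \<omega> k = ti \<omega>' k" "ii \<omega> k = ii \<omega>' k" "xi \<omega> k = xi \<omega>' k"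
    "useful \<omega> k S = useful \<omega>' k S" "tm \<omega> k = tm \<omega>' k"
proof -
  have r: "gr \<omega> k = gr \<omega>' k" "sts \<omega> k = sts \<omega>' k" using run_agree[OF assms] by auto
  show "J \<omega> k = J \<omega>' k" "ti \<omega> k = ti \<omega>' k" "ii \<omega> k = ii \<omega>' k" "xi \<omega> k = xi \<omega>' k"
    "useful \<omega> k S = useful \<omega>' k S" by (simp_all add: J_def ti_def ii_def xi_def useful_def r)
  show "tm \<omega> k = tm \<omega>' k"
  proof (cases k)
    case 0 then show ?thesis by (simp add: tm_0)
  next
    case (Suc k')
    have "gr \<omega> k' = gr \<omega>' k'" using run_agree[of k' \<omega> \<omega>'] assms Suc by auto
    then show ?thesis using Suc by (simp add: tm_Suc ti_def)
  qed
qed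

lemma aug_agree: "\<forall>i<k. \<omega> i = \<omega>' i \<Longrightarrow> aug \<omega> k = aug \<omega>' k"
proof (induction k)
  case 0 then show ?case by simp
next
  case (Suc k)
  then have h: "\<forall>i<k. \<omega> i = \<omega>' i" by auto
  have "aug \<omega> k = aug \<omega>' k" using Suc h by blast
  moreover note agree_k[OF h] agree_k(1)[OF Suc.prems]
  ultimately show ?case by (simp only: aug.simps)
qed

lemma V_agree: "\<forall>i<k. \<omega> i = \<omega>' i \<Longrightarrow> V \<omega> k = V \<omega>' k"
  unfolding V_def Ys_def U_def using aug_agree[of k \<omega> \<omega>'] agree_k(1)[of k \<omega> \<omega>'] by simp


lemma sum_upd_Suc:
  assumes "i \<in> {1..n}"
  shows "(\<Sum>j\<in>{1..n}. (u(i := Suc (u i))) j) = (\<Sum>j\<in>{1..n}. u j) + 1"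
proof -
  have "(u(i := Suc (u i))) = (\<lambda>j. u j + (if j = i then 1 else 0))" by auto
  then have "(\<Sum>j\<in>{1..n}. (u(i := Suc (u i))) j) = (\<Sum>j\<in>{1..n}. u j) + (\<Sum>j\<in>{1..n}. if j = i then 1 else 0)"
    by (simp add: sum.distrib)
  also have "(\<Sum>j\<in>{1..n}. if j = i then 1 else (0::nat)) = 1" using assms by simp
  finally show ?thesis .
qed

lemma V_Suc_frozen: "\<not> J \<omega> k < T \<Longrightarrow> V \<omega> (Suc k) = V \<omega> k"
  unfolding V_def using Ys_frozen1[of \<omega> k] J_mono1[of \<omega> k] by simp

lemma V_Suc_nouse:
  assumes "\<not> useful \<omega> k (Sa \<omega> k)"
  shows "V \<omega> (Suc k) = V \<omega> k"
proof -
  have np: "\<not> J \<omega> k < J \<omega> (Suc k)" using inv_step[OF Inv_all[of \<omega> k]] assms by blast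
  then have JS: "J \<omega> (Suc k) = J \<omega> k" using J_mono1[of \<omega> k] by simp
  have "aug \<omega> (Suc k) = (Sa \<omega> k, U \<omega> k, Ys \<omega> k)" using aug_Suc_unf[of \<omega> k] assms np by simp
  then have "Ys \<omega> (Suc k) = Ys \<omega> k" "U \<omega> (Suc k) = U \<omega> k" by (simp_all add: Ys_def U_def)
  then show ?thesis unfolding V_def JS by simp
qed

lemma V_k_eq: "J \<omega> k < T \<Longrightarrow> V \<omega> k = exp (12 * (a0 - Ys \<omega> k)) * \<rho> ^ (T - 1 - J \<omega> k) * \<psi> p (real (\<Sum>j\<in>{1..n}. U \<omega> k j))"
  unfolding V_def by simp

lemma V_Suc_bound:
  assumes use: "useful \<omega> k (Sa \<omega> k)" and JT: "J \<omega> k < T"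
  defines "c \<equiv> real (\<Sum>j\<in>{1..n}. U \<omega> k j)"
  shows "V \<omega> (Suc k) \<le> exp (12 * (a0 - Ys \<omega> k)) * \<rho> ^ (T - 1 - J \<omega> k) *
     (if \<omega> k then max (exp (-12 * min 1 (p * (c + 1)))) (\<psi> p (c + 1)) else \<psi> p (c + 1))"
proof -
  define E where "E = exp (12 * (a0 - Ys \<omega> k))"
  define R where "R = \<rho> ^ (T - 1 - J \<omega> k)"
  have E0: "0 \<le> E" "0 \<le> R" using rho_pos by (simp_all add: E_def R_def)
  define u' where "u' = (U \<omega> k)(ii \<omega> k := Suc (U \<omega> k (ii \<omega> k)))"
  have su: "real (\<Sum>j\<in>{1..n}. u' j) = c + 1"
    unfolding u'_def c_def using sum_upd_Suc[OF ii_range[of \<omega> k], of "U \<omega> k"] by simp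
  have st: "J \<omega> k \<le> J \<omega> (Suc k) \<and> (J \<omega> k < J \<omega> (Suc k) \<longrightarrow> \<omega> k \<and> J \<omega> (Suc k) = Suc (J \<omega> k))"
    using inv_step[OF Inv_all[of \<omega> k]] by blast
  show ?thesis
  proof (cases "J \<omega> k < J \<omega> (Suc k)")
    case False
    then have JS: "J \<omega> (Suc k) = J \<omega> k" using st by simp
    have "aug \<omega> (Suc k) = (Sa \<omega> k, u', Ys \<omega> k)" using aug_Suc_unf[of \<omega> k] use False by (simp add: u'_def)
    then have "Ys \<omega> (Suc k) = Ys \<omega> k" "U \<omega> (Suc k) = u'" by (simp_all add: Ys_def U_def)
    then have "V \<omega> (Suc k) = E * R * \<psi> p (c + 1)" unfolding V_def JS using JT su by (simp add: E_def R_def)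
    also have "\<dots> \<le> E * R * (if \<omega> k then max (exp (-12 * min 1 (p * (c + 1)))) (\<psi> p (c + 1)) else \<psi> p (c + 1))"
      using E0 by (intro mult_left_mono) (auto simp: zero_le_mult_iff)
    finally show ?thesis by (simp add: E_def R_def)
  next
    case True
    then have wk: "\<omega> k" and JS: "J \<omega> (Suc k) = Suc (J \<omega> k)" using st by auto
    define m where "m = min 1 (p * (c + 1))"
    have "aug \<omega> (Suc k) = (ti \<omega> k, (\<lambda>_. 0), Ys \<omega> k + m)" using aug_Suc_unf[of \<omega> k] use True JT su
      by (simp add: u'_def m_def)
    then have P: "Ys \<omega> (Suc k) = Ys \<omega> k + m" "U \<omega> (Suc k) = (\<lambda>_. 0)" by (simp_all add: Ys_def U_def)
    have ps0: "\<psi> p 0 = \<rho>" by (simp add: \<psi>_def \<rho>_def)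
    have RR: "(if Suc (J \<omega> k) < T then \<rho> ^ (T - 1 - Suc (J \<omega> k)) * \<rho> else 1) = R"
    proof (cases "Suc (J \<omega> k) < T")
      case True
      then have "T - 1 - J \<omega> k = Suc (T - 1 - Suc (J \<omega> k))" by simp
      then show ?thesis using True by (simp add: R_def power_Suc2[symmetric])
    next
      case False
      then have "T - 1 - J \<omega> k = 0" using JT by simp
      then show ?thesis using False by (simp add: R_def)
    qed
    have z: "\<psi> p (real (\<Sum>j\<in>{1..n}. (0::nat))) = \<rho>" using ps0 by simp
    have "V \<omega> (Suc k) = exp (12 * (a0 - (Ys \<omega> k + m))) * R"
      unfolding V_def P JS z RR by simp
    also have "\<dots> = E * R * exp (-12 * m)"
    proof -
      have "exp (12 * (a0 - (Ys \<omega> k + m))) = exp (12 * (a0 - Ys \<omega> k)) * exp (-12 * m)"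
        unfolding mult_exp_exp by (simp add: algebra_simps)
      then show ?thesis unfolding E_def by simp
    qed
    also have "\<dots> \<le> E * R * (if \<omega> k then max (exp (-12 * min 1 (p * (c + 1)))) (\<psi> p (c + 1)) else \<psi> p (c + 1))"
      using E0 wk by (intro mult_left_mono) (auto simp: m_def zero_le_mult_iff)
    finally show ?thesis by (simp add: E_def R_def)
  qed
qed

lemma V_step: "p * V (fun_upd \<omega> k True) (Suc k) + (1 - p) * V (fun_upd \<omega> k False) (Suc k) \<le> V \<omega> k"
proof -
  define \<omega>1 where "\<omega>1 = fun_upd \<omega> k True"
  define \<omega>0 where "\<omega>0 = fun_upd \<omega> k False"
  have ag1: "\<forall>i<k. \<omega>1 i = \<omega> i" and ag0: "\<forall>i<k. \<omega>0 i = \<omega> i" by (simp_all add: \<omega>1_def \<omega>0_def)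
  have A1: "aug \<omega>1 k = aug \<omega> k" and A0: "aug \<omega>0 k = aug \<omega> k" using aug_agree ag1 ag0 by blast+
  have S1: "Sa \<omega>1 k = Sa \<omega> k" "U \<omega>1 k = U \<omega> k" "Ys \<omega>1 k = Ys \<omega> k"
    and S0: "Sa \<omega>0 k = Sa \<omega> k" "U \<omega>0 k = U \<omega> k" "Ys \<omega>0 k = Ys \<omega> k"
    using A1 A0 by (simp_all add: Sa_def U_def Ys_def)
  have J1: "J \<omega>1 k = J \<omega> k" and J0: "J \<omega>0 k = J \<omega> k" using agree_k(1) ag1 ag0 by blast+
  have u1: "useful \<omega>1 k S = useful \<omega> k S" and u0: "useful \<omega>0 k S = useful \<omega> k S" for S
    using agree_k(5) ag1 ag0 by blast+
  have V1k: "V \<omega>1 k = V \<omega> k" and V0k: "V \<omega>0 k = V \<omega> k" using V_agree ag1 ag0 by blast+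
  have p0: "0 \<le> 1 - p" using p by simp
  show ?thesis
  proof (cases "J \<omega> k < T \<and> useful \<omega> k (Sa \<omega> k)")
    case False
    have "V \<omega>1 (Suc k) = V \<omega> k"
    proof (cases "J \<omega> k < T")
      case True
      then have "\<not> useful \<omega>1 k (Sa \<omega>1 k)" using False u1 S1 by simp
      then show ?thesis using V_Suc_nouse V1k by simp
    next
      case False
      then show ?thesis using V_Suc_frozen[of \<omega>1 k] J1 V1k by simp
    qed
    moreover have "V \<omega>0 (Suc k) = V \<omega> k"
    proof (cases "J \<omega> k < T")
      case True
      then have "\<not> useful \<omega>0 k (Sa \<omega>0 k)" using False u0 S0 by simp
      then show ?thesis using V_Suc_nouse V0k by simp
    next
      case False
      then show ?thesis using V_Suc_frozen[of \<omega>0 k] J0 V0k by simp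
    qed
    ultimately show ?thesis unfolding \<omega>1_def \<omega>0_def by (simp add: algebra_simps)
  next
    case True
    define c where "c = real (\<Sum>j\<in>{1..n}. U \<omega> k j)"
    define K where "K = exp (12 * (a0 - Ys \<omega> k)) * \<rho> ^ (T - 1 - J \<omega> k)"
    have K0: "0 \<le> K" using rho_pos by (simp add: K_def)
    have b1: "V \<omega>1 (Suc k) \<le> K * max (exp (-12 * min 1 (p * (c + 1)))) (\<psi> p (c + 1))"
      using V_Suc_bound[of \<omega>1 k] True u1 S1 J1 by (simp add: \<omega>1_def K_def c_def)
    have b0: "V \<omega>0 (Suc k) \<le> K * \<psi> p (c + 1)"
      using V_Suc_bound[of \<omega>0 k] True u0 S0 J0 by (simp add: \<omega>0_def K_def c_def)
    have "p * V \<omega>1 (Suc k) + (1 - p) * V \<omega>0 (Suc k)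
        \<le> p * (K * max (exp (-12 * min 1 (p * (c + 1)))) (\<psi> p (c + 1))) + (1 - p) * (K * \<psi> p (c + 1))"
      using b1 b0 p p0 by (intro add_mono mult_left_mono) auto
    also have "\<dots> = K * (p * max (exp (-12 * min 1 (p * (c + 1)))) (\<psi> p (c + 1)) + (1 - p) * \<psi> p (c + 1))"
      by (simp add: algebra_simps)
    also have "\<dots> \<le> K * \<psi> p c"
      by (intro mult_left_mono psi_step K0) (use p in \<open>auto simp: c_def intro: sum_nonneg\<close>)
    also have "\<dots> = V \<omega> k" using V_k_eq True by (simp add: K_def c_def)
    finally show ?thesis unfolding \<omega>1_def \<omega>0_def .
  qed
qed

end

definition ext :: "bool list \<Rightarrow> nat \<Rightarrow> bool" where
  "ext w i = (if i < length w then w ! i else False)"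
definition wt :: "real \<Rightarrow> bool list \<Rightarrow> real" where
  "wt p w = (\<Prod>i<length w. if w ! i then p else 1 - p)"

lemma ext_snoc: "ext (w @ [b]) = fun_upd (ext w) (length w) b"
  by (auto simp: ext_def nth_append fun_eq_iff)

lemma wt_snoc: "wt p (w @ [b]) = wt p w * (if b then p else 1 - p)"
  unfolding wt_def by (simp add: nth_append)

lemma wt_nonneg: "0 \<le> p \<Longrightarrow> p \<le> 1 \<Longrightarrow> 0 \<le> wt p w"
  unfolding wt_def by (intro prod_nonneg) auto

lemma fin_lists: "finite {w::bool list. length w = K}"
  using finite_lists_length_eq[of "UNIV::bool set" K] by simp

lemma sum_lists_Suc:
  "(\<Sum>w\<in>{w::bool list. length w = Suc K}. f w) = (\<Sum>w\<in>{w. length w = K}. f (w @ [True]) + f (w @ [False]))"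
proof -
  have eq: "{w::bool list. length w = Suc K} = (\<lambda>(w,b). w @ [b]) ` ({w. length w = K} \<times> UNIV)"
  proof (intro set_eqI iffI)
    fix w :: "bool list" assume "w \<in> {w. length w = Suc K}"
    then have "length w = Suc K" by simp
    then show "w \<in> (\<lambda>(w,b). w @ [b]) ` ({w. length w = K} \<times> UNIV)"
      by (cases w rule: rev_cases) (auto simp: image_iff)
  qed auto
  have inj: "inj_on (\<lambda>(w,b). w @ [b]) ({w::bool list. length w = K} \<times> UNIV)"
    by (auto simp: inj_on_def)
  have "(\<Sum>w\<in>{w::bool list. length w = Suc K}. f w) = (\<Sum>(w,b)\<in>{w::bool list. length w = K} \<times> UNIV. f (w @ [b]))"
    unfolding eq by (subst sum.reindex[OF inj]) (simp add: case_prod_unfold)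
  also have "\<dots> = (\<Sum>w\<in>{w. length w = K}. \<Sum>b\<in>UNIV. f (w @ [b]))"
    by (rule sum.cartesian_product[symmetric])
  also have "\<dots> = (\<Sum>w\<in>{w. length w = K}. f (w @ [True]) + f (w @ [False]))"
    by (simp add: UNIV_bool add.commute)
  finally show ?thesis .
qed

lemma supermart:
  fixes Pot :: "nat \<Rightarrow> (nat \<Rightarrow> bool) \<Rightarrow> real"
  assumes p: "0 \<le> p" "p \<le> 1"
    and step: "\<And>\<omega> k. p * Pot (Suc k) (fun_upd \<omega> k True) + (1 - p) * Pot (Suc k) (fun_upd \<omega> k False) \<le> Pot k \<omega>"
  shows "(\<Sum>w\<in>{w. length w = K}. Pot K (ext w) * wt p w) \<le> Pot 0 (ext [])"
proof (induction K)
  case 0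
  have "{w::bool list. length w = 0} = {[]}" by auto
  then show ?case by (simp add: wt_def)
next
  case (Suc K)
  have "(\<Sum>w\<in>{w. length w = Suc K}. Pot (Suc K) (ext w) * wt p w)
      = (\<Sum>w\<in>{w. length w = K}. wt p w * (p * Pot (Suc K) (fun_upd (ext w) (length w) True)
            + (1 - p) * Pot (Suc K) (fun_upd (ext w) (length w) False)))"
    unfolding sum_lists_Suc by (intro sum.cong refl) (simp add: ext_snoc wt_snoc algebra_simps)
  also have "\<dots> \<le> (\<Sum>w\<in>{w. length w = K}. wt p w * Pot K (ext w))"
  proof (rule sum_mono)
    fix w assume "w \<in> {w::bool list. length w = K}"
    then have l: "length w = K" by simp
    show "wt p w * (p * Pot (Suc K) (fun_upd (ext w) (length w) True)
            + (1 - p) * Pot (Suc K) (fun_upd (ext w) (length w) False)) \<le> wt p w * Pot K (ext w)"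
      using step[where \<omega>="ext w" and k=K] l wt_nonneg[OF p, of w] by (intro mult_left_mono) auto
  qed
  also have "\<dots> \<le> Pot 0 (ext [])" using Suc by (simp add: mult.commute)
  finally show ?case .
qed

abbreviation BM :: "real \<Rightarrow> (nat \<Rightarrow> bool) measure" where
  "BM p \<equiv> PiM UNIV (\<lambda>_::nat. measure_pmf (bernoulli_pmf p))"

lemma space_BM[simp]: "space (BM p) = UNIV"
  by (auto simp: space_PiM PiE_def extensional_def)

lemma meas_prefix:
  fixes Q :: "(nat \<Rightarrow> bool) \<Rightarrow> bool"
  assumes p: "0 \<le> p" "p \<le> 1" and Qd: "\<And>\<omega> \<omega>'. (\<forall>i<K. \<omega> i = \<omega>' i) \<Longrightarrow> Q \<omega> = Q \<omega>'"
  shows "{\<omega>. Q \<omega>} \<in> sets (BM p)"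
    "measure (BM p) {\<omega>. Q \<omega>} = (\<Sum>w\<in>{w. length w = K \<and> Q (ext w)}. wt p w)"
proof -
  define B where "B = measure_pmf (bernoulli_pmf p)"
  define cyl where "cyl w = prod_emb UNIV (\<lambda>_. B) {..<K} (\<Pi>\<^sub>E i\<in>{..<K}. {w ! i})" for w
  define W where "W = {w::bool list. length w = K \<and> Q (ext w)}"
  have finW: "finite W" unfolding W_def by (rule finite_subset[OF _ fin_lists[of K]]) auto
  have cyl_eq: "cyl w = {\<omega>. \<forall>i<K. \<omega> i = w ! i}" for w
    unfolding cyl_def by (auto simp: prod_emb_iff B_def PiE_iff extensional_def)
  have cyl_sets: "cyl w \<in> sets (BM p)" for w
    unfolding cyl_def B_def by (rule sets_PiM_I) auto
  have Qeq: "{\<omega>. Q \<omega>} = (\<Union>w\<in>W. cyl w)"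
  proof (intro set_eqI iffI)
    fix \<omega> assume "\<omega> \<in> {\<omega>. Q \<omega>}"
    then have Q: "Q \<omega>" by simp
    define w where "w = map \<omega> [0..<K]"
    have "\<forall>i<K. ext w i = \<omega> i" by (simp add: ext_def w_def)
    then have "Q (ext w)" using Qd[of "ext w" \<omega>] Q by simp
    then have "w \<in> W" by (simp add: W_def w_def)
    moreover have "\<omega> \<in> cyl w" by (simp add: cyl_eq w_def)
    ultimately show "\<omega> \<in> (\<Union>w\<in>W. cyl w)" by blast
  next
    fix \<omega> assume "\<omega> \<in> (\<Union>w\<in>W. cyl w)"
    then obtain w where w: "w \<in> W" "\<omega> \<in> cyl w" by blast
    then have "\<forall>i<K. ext w i = \<omega> i" by (simp add: cyl_eq ext_def W_def)
    then show "\<omega> \<in> {\<omega>. Q \<omega>}" using Qd[of "ext w" \<omega>] w(1) by (simp add: W_def)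
  qed
  show "{\<omega>. Q \<omega>} \<in> sets (BM p)" unfolding Qeq using finW cyl_sets by blast
  have disj: "disjoint_family_on cyl W"
    unfolding disjoint_family_on_def
  proof (intro ballI impI)
    fix v w assume vw: "v \<in> W" "w \<in> W" "v \<noteq> w"
    then have "length v = K" "length w = K" by (auto simp: W_def)
    then have "\<exists>i<K. v ! i \<noteq> w ! i" using vw(3) nth_equalityI[of v w] by auto
    then obtain i where i: "i < K" "v ! i \<noteq> w ! i" by blast
    then show "cyl v \<inter> cyl w = {}" by (auto simp: cyl_eq)
  qed
  have PS: "prob_space (BM p)" by (rule prob_space_PiM) (simp add: prob_space_measure_pmf)
  then interpret BMs: prob_space "BM p" .
  have mcyl: "measure (BM p) (cyl w) = wt p w" if "w \<in> W" for w
  proof -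
    have lw: "length w = K" using that by (simp add: W_def)
    have "emeasure (BM p) (cyl w) = (\<Prod>i\<in>{..<K}. emeasure B {w ! i})"
      unfolding cyl_def B_def by (rule emeasure_PiM_emb) (auto simp: prob_space_measure_pmf)
    also have "\<dots> = (\<Prod>i\<in>{..<K}. ennreal (if w ! i then p else 1 - p))"
      unfolding B_def by (intro prod.cong refl) (simp add: emeasure_pmf_single p)
    also have "\<dots> = ennreal (wt p w)"
      unfolding wt_def lw using p by (intro prod_ennreal) auto
    finally show ?thesis unfolding measure_def using wt_nonneg[OF p] by simp
  qed
  have "measure (BM p) {\<omega>. Q \<omega>} = (\<Sum>w\<in>W. measure (BM p) (cyl w))"
    unfolding Qeq by (rule BMs.finite_measure_finite_Union[OF finW _ disj]) (use cyl_sets in blast)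
  also have "\<dots> = (\<Sum>w\<in>W. wt p w)" using mcyl by simp
  finally show "measure (BM p) {\<omega>. Q \<omega>} = (\<Sum>w\<in>{w. length w = K \<and> Q (ext w)}. wt p w)"
    unfolding W_def .
qed


context Lw begin

lemma V0_le: "exp (12 * a0) * \<rho> ^ T \<le> \<delta>"
proof -
  have tb: "t \<le> 1/24 * Fst * (real T / 2 + ln \<delta>)" using t(2) unfolding Fst_def .
  have "12 * a0 = 24 * t / Fst" by (simp add: a0_def)
  also have "\<dots> \<le> real T / 2 + ln \<delta>" using tb Fst_pos by (simp add: field_simps)
  finally have "12 * a0 \<le> real T / 2 + ln \<delta>" .
  then have "exp (12 * a0) \<le> exp (real T / 2 + ln \<delta>)" by simp
  also have "\<dots> = exp (real T * (1/2)) * \<delta>" using \<delta> by (simp add: exp_add)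
  finally have e1: "exp (12 * a0) \<le> exp (real T * (1/2)) * \<delta>" .
  have "exp (-12::real) \<le> 1/13"
  proof -
    have "13 \<le> exp (12::real)" using exp_ge_add_one_self[of 12] by simp
    then show ?thesis by (simp add: exp_minus field_simps)
  qed
  then have r: "\<rho> \<le> 2/13" by (simp add: \<rho>_def)
  have "exp (1/2::real) \<le> exp 1" by simp
  also have "\<dots> \<le> 3" by (rule exp_le)
  finally have e2: "exp (1/2::real) \<le> 3" .
  have re: "\<rho> * exp (1/2) \<le> 1"
  proof -
    have "\<rho> * exp (1/2) \<le> 2/13 * 3" using r e2 rho_pos by (intro mult_mono) auto
    then show ?thesis by simp
  qed
  have "exp (12 * a0) * \<rho> ^ T \<le> exp (real T * (1/2)) * \<delta> * \<rho> ^ T"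
    using e1 rho_pos by (intro mult_right_mono) auto
  also have "\<dots> = (\<rho> * exp (1/2)) ^ T * \<delta>"
  proof -
    have "exp (real T * (1/2)) = exp (1/2) ^ T" by (rule exp_of_nat_mult)
    then show ?thesis by (simp add: power_mult_distrib)
  qed
  also have "\<dots> \<le> 1 * \<delta>"
    using re rho_pos \<delta> by (intro mult_right_mono power_le_one) auto
  finally show ?thesis by simp
qed

lemma main_locale:
  "\<exists>E \<in> sets (PiM UNIV (\<lambda>_::nat. measure_pmf (bernoulli_pmf p))).
     measure (PiM UNIV (\<lambda>_::nat. measure_pmf (bernoulli_pmf p))) E \<ge> 1 - \<delta> \<and>
     (\<forall>\<omega>\<in>E. \<forall>k. proto_time A (\<lambda>i. delayed_oracle (\<tau> i) (Gmap grad p)) (0, 0, False) \<omega> k \<le> t \<longrightarrow>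
        prog (proto_point A (\<lambda>i. delayed_oracle (\<tau> i) (Gmap grad p)) (0, 0, False) \<omega> k) < T)"
proof -
  have p01: "0 \<le> p" "p \<le> 1" using p by auto
  define bad where "bad k \<omega> \<longleftrightarrow> tm \<omega> k \<le> t \<and> T \<le> prog (xi \<omega> k)" for k \<omega>
  define C where "C K = {\<omega>. \<exists>k\<le>K. bad k \<omega>}" for K
  have Cd: "(\<exists>k\<le>K. bad k \<omega>) = (\<exists>k\<le>K. bad k \<omega>')" if "\<forall>i<K. \<omega> i = \<omega>' i" for K \<omega> \<omega>'
  proof -
    have "bad k \<omega> = bad k \<omega>'" if "k \<le> K" for k
    proof -
      have h: "\<forall>i<k. \<omega> i = \<omega>' i" using \<open>\<forall>i<K. \<omega> i = \<omega>' i\<close> that by auto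
      show ?thesis unfolding bad_def using agree_k(4)[OF h] agree_k(6)[OF h] by simp
    qed
    then show ?thesis by blast
  qed
  have Csets: "C K \<in> sets (BM p)" for K
    unfolding C_def by (rule meas_prefix(1)[OF p01]) (rule Cd)
  have Cmeas: "measure (BM p) (C K) \<le> \<delta>" for K
  proof -
    have "measure (BM p) (C K) = (\<Sum>w\<in>{w. length w = K \<and> (\<exists>k\<le>K. bad k (ext w))}. wt p w)"
      unfolding C_def by (rule meas_prefix(2)[OF p01]) (rule Cd)
    also have "\<dots> \<le> (\<Sum>w\<in>{w. length w = K \<and> (\<exists>k\<le>K. bad k (ext w))}. V (ext w) K * wt p w)"
    proof (rule sum_mono)
      fix w assume "w \<in> {w. length w = K \<and> (\<exists>k\<le>K. bad k (ext w))}"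
      then obtain k where "k \<le> K" "bad k (ext w)" by blast
      then have "1 \<le> V (ext w) K" using bad_V unfolding bad_def by blast
      then show "wt p w \<le> V (ext w) K * wt p w"
        using wt_nonneg[OF p01, of w] mult_right_mono[of 1 "V (ext w) K" "wt p w"] by simp
    qed
    also have "\<dots> \<le> (\<Sum>w\<in>{w. length w = K}. V (ext w) K * wt p w)"
      by (rule sum_mono2[OF fin_lists]) (auto intro!: mult_nonneg_nonneg V_nonneg wt_nonneg p01)
    also have "\<dots> \<le> V (ext []) 0"
      using supermart[OF p01, of "\<lambda>k \<omega>. V \<omega> k" K] V_step by simp
    also have "\<dots> \<le> \<delta>" using V_0 V0_le by simp
    finally show ?thesis .
  qed
  have PS: "prob_space (BM p)" by (rule prob_space_PiM) (simp add: prob_space_measure_pmf)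
  then interpret BMs: prob_space "BM p" .
  have inc: "incseq C" unfolding incseq_def C_def
  proof (intro allI impI subsetI)
    fix m n :: nat and \<omega> assume mn: "m \<le> n" and "\<omega> \<in> {\<omega>. \<exists>k\<le>m. bad k \<omega>}"
    then obtain k where "k \<le> m" "bad k \<omega>" by blast
    then have "k \<le> n \<and> bad k \<omega>" using mn by simp
    then show "\<omega> \<in> {\<omega>. \<exists>k\<le>n. bad k \<omega>}" by blast
  qed
  have rng: "range C \<subseteq> sets (BM p)" using Csets by auto
  have lim: "(\<lambda>K. measure (BM p) (C K)) \<longlonglongrightarrow> measure (BM p) (\<Union>K. C K)"
    by (rule BMs.finite_Lim_measure_incseq[OF rng inc])
  have Uleq: "measure (BM p) (\<Union>K. C K) \<le> \<delta>"
    by (rule LIMSEQ_le_const2[OF lim]) (use Cmeas in auto)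
  define E where "E = space (BM p) - (\<Union>K. C K)"
  have Es: "E \<in> sets (BM p)" unfolding E_def by (intro sets.compl_sets sets.countable_UN rng)
  have "measure (BM p) E = 1 - measure (BM p) (\<Union>K. C K)"
    unfolding E_def by (rule BMs.prob_compl) (use rng in auto)
  then have Em: "1 - \<delta> \<le> measure (BM p) E" using Uleq by simp
  have Egood: "\<forall>\<omega>\<in>E. \<forall>k. tm \<omega> k \<le> t \<longrightarrow> prog (xi \<omega> k) < T"
  proof (intro ballI allI impI)
    fix \<omega> k assume "\<omega> \<in> E" "tm \<omega> k \<le> t"
    then have "\<omega> \<notin> C k" unfolding E_def by auto
    then have "\<not> bad k \<omega>" unfolding C_def by auto
    with \<open>tm \<omega> k \<le> t\<close> show "prog (xi \<omega> k) < T" unfolding bad_def by simp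
  qed
  have "xi \<omega> k = proto_point A (\<lambda>i. delayed_oracle (\<tau> i) (Gmap grad p)) (0, 0, False) \<omega> k" for \<omega> k
    unfolding xi_def gr_def proto_point_def ..
  then have Egood': "\<forall>\<omega>\<in>E. \<forall>k. proto_time A (\<lambda>i. delayed_oracle (\<tau> i) (Gmap grad p)) (0, 0, False) \<omega> k \<le> t \<longrightarrow>
        prog (proto_point A (\<lambda>i. delayed_oracle (\<tau> i) (Gmap grad p)) (0, 0, False) \<omega> k) < T"
    using Egood unfolding tm_def by simp
  show ?thesis using Es Em Egood' by blast
qed

end

theorem mainTheorem13:
  fixes T :: nat and n :: nat and p :: real and \<tau> :: "nat \<Rightarrow> real"
    and f :: "real ^ ('n::{finite,linorder}) \<Rightarrow> real"
    and grad :: "real ^ ('n::{finite,linorder}) \<Rightarrow> real ^ ('n::{finite,linorder})"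
    and A :: "nat \<Rightarrow> (real ^ ('n::{finite,linorder})) list \<Rightarrow> real \<times> nat \<times> (real ^ ('n::{finite,linorder}))"
    and \<delta> t :: real
  assumes T_pos: "1 \<le> T" and T_le: "T \<le> CARD('n)"
    and grad: "\<And>x. (f has_derivative (\<lambda>h. grad x \<bullet> h)) (at x)"
    and prog_grad: "\<And>x. prog (grad x) \<le> prog x + 1"
    and n_pos: "1 \<le> n"
    and tau_pos: "0 < \<tau> 1"
    and tau_mono: "\<And>i j. 1 \<le> i \<Longrightarrow> i \<le> j \<Longrightarrow> j \<le> n \<Longrightarrow> \<tau> i \<le> \<tau> j"
    and p: "0 < p" "p \<le> 1"
    and alg: "is_algorithm n A"
    and zero_resp: "\<And>\<omega> k. supp (proto_point A (\<lambda>i. delayed_oracle (\<tau> i) (Gmap grad p)) (0, 0, False) \<omega> k)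
        \<subseteq> \<Union> (supp ` set (grads A (\<lambda>i. delayed_oracle (\<tau> i) (Gmap grad p)) (0, 0, False) \<omega> k))"
    and \<delta>: "0 < \<delta>" "\<delta> \<le> 1"
    and t: "0 \<le> t"
      "t \<le> 1/24 * Min ((\<lambda>m. inverse (\<Sum>i=1..m. 1 / \<tau> i) * (1/p + real m)) ` {1..n})
             * (real T / 2 + ln \<delta>)"
  shows "\<exists>E \<in> sets (PiM UNIV (\<lambda>_::nat. measure_pmf (bernoulli_pmf p))).
     measure (PiM UNIV (\<lambda>_::nat. measure_pmf (bernoulli_pmf p))) E \<ge> 1 - \<delta> \<and>
     (\<forall>\<omega>\<in>E. \<forall>k. proto_time A (\<lambda>i. delayed_oracle (\<tau> i) (Gmap grad p)) (0, 0, False) \<omega> k \<le> t \<longrightarrow>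
        prog (proto_point A (\<lambda>i. delayed_oracle (\<tau> i) (Gmap grad p)) (0, 0, False) \<omega> k) < T)"
proof -
  interpret L: Lw n T p \<tau> grad A t \<delta>
    by unfold_locales (fact T_pos prog_grad n_pos tau_pos tau_mono p alg zero_resp \<delta> t)+
  show ?thesis by (rule L.main_locale)
qed

end
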